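(* Let $N, J \ge 1$ be integers and let $F_1,\dots,F_J:\mathbb{R}_+^N\to\mathbb{R}_+$ be upper semicontinuous, concave functions that are homogeneous of degree 1. Let $x\in\mathbb{R}_+^N$. Then there exist $x_1,\dots,x_J\in\mathbb{R}_+^N$ with $\sum_{j=1}^J x_j=x$ attaining $$\max\Big\{\sum_{j=1}^J F_j(y_j): y_j\in\mathbb{R}_+^N \text{ for all } j,\ \sum_{j=1}^J y_j=x\Big\}$$ such that $x_j\neq 0$ for at most $N$ indices $j$.
   Context: Homogeneous of degree 1 means $F_j(\lambda x)=\lambda F_j(x)$ for all $\lambda\ge0$, $x\in\mathbb{R}_+^N$. *)

theory Defs
  imports "HOL-Analysis.Analysis"
begin

text \<open>The nonnegative orthant R_+^N, with N = CARD('n).\<close>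
definition nonneg_orthant :: "(real ^ 'n) set" where
  "nonneg_orthant = {y. \<forall>i. 0 \<le> y $ i}"

definition usc_on :: "'a::topological_space set \<Rightarrow> ('a \<Rightarrow> real) \<Rightarrow> bool" where
  "usc_on S f \<longleftrightarrow> (\<forall>t. openin (top_of_set S) {x \<in> S. f x < t})"

definition homogeneous1_on :: "(real ^ 'n) set \<Rightarrow> (real ^ 'n \<Rightarrow> real) \<Rightarrow> bool" where
  "homogeneous1_on S f \<longleftrightarrow> (\<forall>c\<ge>0. \<forall>x\<in>S. f (c *\<^sub>R x) = c * f x)"

end

theory Submission
  imports Defs
begin

lemma usc_const: "usc_on S (\<lambda>x. c)"
  unfolding usc_on_def
proof
  fix t
  show "openin (top_of_set S) {x \<in> S. c < t}"
    by (cases "c < t") auto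
qed

lemma usc_add:
  assumes f: "usc_on S f" and g: "usc_on S g"
  shows "usc_on S (\<lambda>x. f x + g x)"
  unfolding usc_on_def
proof
  fix t
  have eq: "{x \<in> S. f x + g x < t} = (\<Union>r. {x \<in> S. f x < r} \<inter> {x \<in> S. g x < t - r})"
  proof (rule set_eqI, rule iffI)
    fix x assume "x \<in> {x \<in> S. f x + g x < t}"
    then have "x \<in> S" "f x < (f x + (t - g x)) / 2" "g x < t - (f x + (t - g x)) / 2" by (auto simp: field_simps)
    then show "x \<in> (\<Union>r. {x \<in> S. f x < r} \<inter> {x \<in> S. g x < t - r})" by blast
  qed auto
  show "openin (top_of_set S) {x \<in> S. f x + g x < t}"
    unfolding eq using f g unfolding usc_on_def by (intro openin_Union) auto
qed

lemma usc_sum: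
  assumes "finite I" "\<And>i. i \<in> I \<Longrightarrow> usc_on S (f i)"
  shows "usc_on S (\<lambda>x. \<Sum>i\<in>I. f i x)"
  using assms
proof (induction I rule: finite_induct)
  case empty
  then show ?case by (simp add: usc_const)
next
  case (insert a I)
  then show ?case by (simp add: usc_add)
qed

lemma usc_comp:
  assumes f: "usc_on T f" and h: "continuous_on S h" and sub: "h ` S \<subseteq> T"
  shows "usc_on S (\<lambda>x. f (h x))"
  unfolding usc_on_def
proof
  fix t
  obtain U where U: "open U" "{y \<in> T. f y < t} = T \<inter> U"
    using f unfolding usc_on_def openin_open by blast
  have "{x \<in> S. f (h x) < t} = S \<inter> h -` U"
  proof -
    have "\<And>x. x \<in> S \<Longrightarrow> (f (h x) < t) = (h x \<in> U)"
      using U(2) sub by blast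
    then show ?thesis by auto
  qed
  then show "openin (top_of_set S) {x \<in> S. f (h x) < t}"
    using continuous_openin_preimage_gen[OF h U(1)] by simp
qed

lemma feasible_le:
  fixes ys :: "nat \<Rightarrow> real ^ 'n"
  assumes "\<forall>j<J. ys j \<in> nonneg_orthant" "(\<Sum>j<J. ys j) = x" "j < J"
  shows "ys j \<in> cbox 0 x"
  unfolding mem_box_cart
proof
  fix i
  have "ys j $ i \<le> (\<Sum>k<J. ys k $ i)"
    using assms by (intro member_le_sum) (auto simp: nonneg_orthant_def)
  also have "\<dots> = x $ i" using assms(2) by (metis sum_component)
  finally show "0 $ i \<le> ys j $ i \<and> ys j $ i \<le> x $ i"
    using assms by (auto simp: nonneg_orthant_def)
qed

lemma exists_max:
  fixes J :: nat and F :: "nat \<Rightarrow> real ^ 'n \<Rightarrow> real" and x :: "real ^ 'n"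
  assumes J: "J \<ge> 1"
    and usc: "\<And>j. j < J \<Longrightarrow> usc_on nonneg_orthant (F j)"
    and x: "x \<in> nonneg_orthant"
  shows "\<exists>xs :: nat \<Rightarrow> real ^ 'n.
           (\<forall>j<J. xs j \<in> nonneg_orthant) \<and> (\<Sum>j<J. xs j) = x \<and>
           (\<forall>ys :: nat \<Rightarrow> real ^ 'n. (\<forall>j<J. ys j \<in> nonneg_orthant) \<and> (\<Sum>j<J. ys j) = x
              \<longrightarrow> (\<Sum>j<J. F j (ys j)) \<le> (\<Sum>j<J. F j (xs j)))"
proof -
  define B where "B = (\<lambda>j::nat. if j < J then cbox 0 x else {0::real^'n})"
  define K where "K = Pi UNIV B \<inter> {ys. (\<Sum>j<J. ys j) = x}"
  define obj where "obj = (\<lambda>ys::nat \<Rightarrow> real^'n. \<Sum>j<J. F j (ys j))"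
  have cb: "cbox 0 x \<subseteq> nonneg_orthant"
    by (auto simp: mem_box_cart nonneg_orthant_def)
  have cPi: "compact (Pi UNIV B)"
  proof -
    have "compact (B i)" for i by (simp add: B_def)
    then have "compactin (product_topology (\<lambda>i. euclidean) UNIV) (PiE UNIV B)"
      by (simp only: compactin_PiE compactin_euclidean_iff) blast
    then show ?thesis by (simp add: euclidean_product_topology PiE_UNIV_domain)
  qed
  have cl: "closed {ys::nat \<Rightarrow> real^'n. (\<Sum>j<J. ys j) = x}"
    by (rule closed_Collect_eq) (intro continuous_on_sum continuous_on_product_coordinates, rule continuous_on_const)
  have cK: "compact K" unfolding K_def using cPi cl by (rule compact_Int_closed)
  have clK: "closed K" using cK compact_imp_closed by blast
  have Kfeas: "\<forall>j<J. ys j \<in> nonneg_orthant" if "ys \<in> K" for ys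
  proof (intro allI impI)
    fix j assume "j < J"
    then have "ys j \<in> B j" using that by (auto simp: K_def)
    then show "ys j \<in> nonneg_orthant" using cb \<open>j < J\<close> by (auto simp: B_def)
  qed
  have uscK: "usc_on K obj"
    unfolding obj_def
  proof (rule usc_sum)
    fix j assume "j \<in> {..<J}"
    then have jJ: "j < J" by simp
    have c1: "continuous_on K (\<lambda>ys::nat \<Rightarrow> real^'n. ys j)"
      by (rule continuous_on_subset[OF continuous_on_product_coordinates]) simp
    have c2: "(\<lambda>ys::nat \<Rightarrow> real^'n. ys j) ` K \<subseteq> nonneg_orthant"
    proof
      fix y assume "y \<in> (\<lambda>ys::nat \<Rightarrow> real^'n. ys j) ` K"
      then obtain ys where "ys \<in> K" "y = ys j" by (rule imageE)
      then show "y \<in> nonneg_orthant" using Kfeas[of ys] jJ by simp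
    qed
    show "usc_on K (\<lambda>ys. F j (ys j))"
      by (rule usc_comp[OF usc[OF jJ] c1 c2])
  qed auto
  define C where "C = (\<lambda>ys. {zs \<in> K. obj ys \<le> obj zs})"
  have clC: "closed (C ys)" for ys
  proof -
    have "openin (top_of_set K) {zs \<in> K. obj zs < obj ys}"
      using uscK unfolding usc_on_def by blast
    then have "closedin (top_of_set K) (K - {zs \<in> K. obj zs < obj ys})"
      by (intro closedin_diff) auto
    moreover have "K - {zs \<in> K. obj zs < obj ys} = C ys"
      by (auto simp: C_def)
    ultimately show ?thesis using clK closedin_closed_trans by metis
  qed
  define e where "e = (\<lambda>j::nat. if j = 0 then x else 0)"
  have eK: "e \<in> K"
  proof -
    have "(\<Sum>j<J. e j) = x"
      using J by (simp add: e_def sum.delta)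
    moreover have "e j \<in> B j" for j
      using x J by (auto simp: e_def B_def mem_box_cart nonneg_orthant_def)
    ultimately show ?thesis by (auto simp: K_def)
  qed
  have "K \<inter> (\<Inter>ys\<in>K. C ys) \<noteq> {}"
  proof (rule compact_imp_fip_image[OF cK clC])
    fix I' assume I': "finite I'" "I' \<subseteq> K"
    show "K \<inter> (\<Inter>ys\<in>I'. C ys) \<noteq> {}"
    proof (cases "I' = {}")
      case True then show ?thesis using eK by blast
    next
      case False
      have "Max (obj ` I') \<in> obj ` I'"
        using I'(1) False by (intro Max_in) simp_all
      then obtain m where m: "m \<in> I'" "obj m = Max (obj ` I')"
        by (metis imageE)
      have "\<forall>y\<in>I'. obj y \<le> obj m"
      proof
        fix y assume y: "y \<in> I'"
        have "obj y \<le> Max (obj ` I')"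
          using I'(1) y by (intro Max_ge) simp_all
        then show "obj y \<le> obj m" using m(2) by simp
      qed
      then have "m \<in> K \<inter> (\<Inter>ys\<in>I'. C ys)"
        unfolding C_def using m(1) I'(2) by blast
      then show ?thesis by blast
    qed
  qed
  then obtain z where z0: "z \<in> K" "\<forall>ys\<in>K. z \<in> C ys"
    by blast
  then have z: "z \<in> K" "\<And>ys. ys \<in> K \<Longrightarrow> obj ys \<le> obj z"
    unfolding C_def by auto
  show ?thesis
  proof (intro exI conjI)
    show "\<forall>j<J. z j \<in> nonneg_orthant" using Kfeas z(1) by blast
    show "(\<Sum>j<J. z j) = x" using z(1) by (simp add: K_def)
    show "\<forall>ys :: nat \<Rightarrow> real ^ 'n. (\<forall>j<J. ys j \<in> nonneg_orthant) \<and> (\<Sum>j<J. ys j) = x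
              \<longrightarrow> (\<Sum>j<J. F j (ys j)) \<le> (\<Sum>j<J. F j (z j))"
    proof (intro allI impI)
      fix ys :: "nat \<Rightarrow> real^'n"
      assume ys: "(\<forall>j<J. ys j \<in> nonneg_orthant) \<and> (\<Sum>j<J. ys j) = x"
      define ys' where "ys' = (\<lambda>j. if j < J then ys j else 0)"
      have s: "(\<Sum>j<J. ys' j) = (\<Sum>j<J. ys j)" "obj ys' = obj ys"
        by (auto simp: ys'_def obj_def intro!: sum.cong)
      have "ys' j \<in> B j" for j
        using ys feasible_le[of J ys x j] by (simp add: B_def ys'_def)
      then have "ys' \<in> K"
        using ys s by (simp add: K_def)
      then have "obj ys' \<le> obj z" by (rule z(2))
      then show "(\<Sum>j<J. F j (ys j)) \<le> (\<Sum>j<J. F j (z j))"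
        using s by (simp add: obj_def)
    qed
  qed
qed

lemma exists_dep:
  fixes xs :: "nat \<Rightarrow> real ^ 'n"
  assumes S: "finite S" and card: "card S > CARD('n)"
  shows "\<exists>c. (\<forall>j. j \<notin> S \<longrightarrow> c j = 0) \<and> (\<exists>j\<in>S. c j \<noteq> 0) \<and> (\<Sum>j\<in>S. c j *\<^sub>R xs j) = 0"
proof (cases "inj_on xs S")
  case False
  then obtain j k where jk: "j \<in> S" "k \<in> S" "j \<noteq> k" "xs j = xs k"
    unfolding inj_on_def by blast
  define c where "c = (\<lambda>i. if i = j then 1 else if i = k then -1 else (0::real))"
  have "(\<Sum>i\<in>S. c i *\<^sub>R xs i) = (\<Sum>i\<in>{j,k}. c i *\<^sub>R xs i)"
    using jk S by (intro sum.mono_neutral_right) (auto simp: c_def)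
  also have "\<dots> = 0" using jk by (simp add: c_def)
  finally show ?thesis using jk by (intro exI[of _ c]) (auto simp: c_def)
next
  case True
  define V where "V = xs ` S"
  have cV: "card V = card S" using True by (simp add: V_def card_image)
  have fV: "finite V" using S by (simp add: V_def)
  have "\<not> independent V"
  proof
    assume "independent V"
    then have "card V \<le> DIM(real^'n)" using independent_bound by blast
    then show False using cV card by simp
  qed
  then obtain u where u: "\<exists>v\<in>V. u v \<noteq> 0" "(\<Sum>v\<in>V. u v *\<^sub>R v) = 0"
    using real_vector.dependent_finite[OF fV] by blast
  define c where "c = (\<lambda>i. if i \<in> S then u (xs i) else 0)"
  have "(\<Sum>i\<in>S. c i *\<^sub>R xs i) = (\<Sum>i\<in>S. u (xs i) *\<^sub>R xs i)"
    by (simp add: c_def)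
  also have "\<dots> = (\<Sum>v\<in>V. u v *\<^sub>R v)"
    unfolding V_def using True by (simp add: sum.reindex)
  also have "\<dots> = 0" by (rule u(2))
  finally have A: "(\<Sum>i\<in>S. c i *\<^sub>R xs i) = 0" .
  obtain v where v: "v \<in> V" "u v \<noteq> 0" using u(1) by blast
  then obtain i where i: "i \<in> S" "v = xs i" unfolding V_def by blast
  then have B: "c i \<noteq> 0" using v by (simp add: c_def)
  have C: "\<forall>j. j \<notin> S \<longrightarrow> c j = 0" by (simp add: c_def)
  show ?thesis
    apply (rule exI[of _ c])
    using A B C i(1) by blast
qed

lemma nonneg_comb_zero:
  fixes xs :: "nat \<Rightarrow> real ^ 'n"
  assumes S: "finite S" and xs: "\<forall>j\<in>S. xs j \<in> nonneg_orthant" and c: "\<forall>j\<in>S. c j \<ge> 0"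
    and sum0: "(\<Sum>j\<in>S. c j *\<^sub>R xs j) = 0" and j: "j \<in> S" and nz: "xs j \<noteq> 0"
  shows "c j = 0"
proof (rule ccontr)
  assume cj: "c j \<noteq> 0"
  have "xs j $ i = 0" for i
  proof -
    have "(\<Sum>k\<in>S. c k * xs k $ i) = (\<Sum>k\<in>S. c k *\<^sub>R xs k) $ i"
      by (simp add: sum_component)
    also have "\<dots> = 0" using sum0 by simp
    finally have "(\<Sum>k\<in>S. c k * xs k $ i) = 0" .
    moreover have "\<forall>k\<in>S. 0 \<le> c k * xs k $ i"
      using c xs unfolding nonneg_orthant_def by (simp add: mult_nonneg_nonneg)
    ultimately have "\<forall>k\<in>S. c k * xs k $ i = 0"
      using sum_nonneg_eq_0_iff[OF S, of "\<lambda>k. c k * xs k $ i"] by simp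
    then have "c j * xs j $ i = 0" using j by blast
    then show ?thesis using cj by simp
  qed
  then have "xs j = 0" by (simp add: vec_eq_iff)
  then show False using nz by simp
qed

lemma reduce:
  fixes J :: nat and F :: "nat \<Rightarrow> real ^ 'n \<Rightarrow> real" and x :: "real ^ 'n"
    and xs :: "nat \<Rightarrow> real ^ 'n"
  assumes hom: "\<And>j. j < J \<Longrightarrow> homogeneous1_on nonneg_orthant (F j)"
    and feas: "\<forall>j<J. xs j \<in> nonneg_orthant" "(\<Sum>j<J. xs j) = x"
    and max: "\<forall>ys :: nat \<Rightarrow> real ^ 'n. (\<forall>j<J. ys j \<in> nonneg_orthant) \<and> (\<Sum>j<J. ys j) = x
              \<longrightarrow> (\<Sum>j<J. F j (ys j)) \<le> (\<Sum>j<J. F j (xs j))"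
    and big: "card {j. j < J \<and> xs j \<noteq> 0} > CARD('n)"
  shows "\<exists>xs' :: nat \<Rightarrow> real ^ 'n.
           (\<forall>j<J. xs' j \<in> nonneg_orthant) \<and> (\<Sum>j<J. xs' j) = x \<and>
           (\<forall>ys :: nat \<Rightarrow> real ^ 'n. (\<forall>j<J. ys j \<in> nonneg_orthant) \<and> (\<Sum>j<J. ys j) = x
              \<longrightarrow> (\<Sum>j<J. F j (ys j)) \<le> (\<Sum>j<J. F j (xs' j))) \<and>
           card {j. j < J \<and> xs' j \<noteq> 0} < card {j. j < J \<and> xs j \<noteq> 0}"
proof -
  define S where "S = {j. j < J \<and> xs j \<noteq> 0}"
  have fS: "finite S" by (simp add: S_def)
  have SJ: "S \<subseteq> {..<J}" by (auto simp: S_def)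
  obtain c where c0: "\<forall>j. j \<notin> S \<longrightarrow> c j = 0" and c1: "\<exists>j\<in>S. c j \<noteq> 0"
      and c2: "(\<Sum>j\<in>S. c j *\<^sub>R xs j) = 0"
    using exists_dep[OF fS big[folded S_def], of xs] by (elim exE conjE)
  have xsS: "\<forall>j\<in>S. xs j \<in> nonneg_orthant" "\<forall>j\<in>S. xs j \<noteq> 0" using feas by (auto simp: S_def)
  have pos: "\<exists>j\<in>S. c j > 0"
  proof (rule ccontr)
    assume "\<not> ?thesis"
    then have "\<forall>j\<in>S. - c j \<ge> 0" by auto
    moreover have "(\<Sum>j\<in>S. (- c j) *\<^sub>R xs j) = 0"
      using c2 by (simp add: sum_negf)
    ultimately have "\<forall>j\<in>S. - c j = 0"
      using nonneg_comb_zero[OF fS xsS(1), of "\<lambda>j. - c j"] xsS(2) by simp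
    then show False using c1 by auto
  qed
  have neg: "\<exists>j\<in>S. c j < 0"
  proof (rule ccontr)
    assume "\<not> ?thesis"
    then have "\<forall>j\<in>S. c j \<ge> 0" by auto
    then have "\<forall>j\<in>S. c j = 0"
      using nonneg_comb_zero[OF fS xsS(1), of c, OF _ c2] xsS(2) by simp
    then show False using c1 by auto
  qed
  have cJ: "(\<Sum>j<J. c j *\<^sub>R xs j) = 0"
  proof -
    have "(\<Sum>j<J. c j *\<^sub>R xs j) = (\<Sum>j\<in>S. c j *\<^sub>R xs j)"
      using SJ c0 by (intro sum.mono_neutral_right) simp_all
    then show ?thesis using c2 by simp
  qed
  define D where "D = (\<Sum>j<J. c j * F j (xs j))"
  define ys where "ys = (\<lambda>s j. (1 - s * c j) *\<^sub>R xs j)"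
  have key: "(\<forall>j<J. ys s j \<in> nonneg_orthant) \<and> (\<Sum>j<J. ys s j) = x \<and>
      (\<Sum>j<J. F j (ys s j)) = (\<Sum>j<J. F j (xs j)) - s * D"
    if hs: "\<forall>j<J. 0 \<le> 1 - s * c j" for s
  proof (intro conjI)
    show "\<forall>j<J. ys s j \<in> nonneg_orthant"
      using hs feas by (auto simp: ys_def nonneg_orthant_def)
    have "(\<Sum>j<J. ys s j) = (\<Sum>j<J. xs j) - s *\<^sub>R (\<Sum>j<J. c j *\<^sub>R xs j)"
      by (simp add: ys_def scaleR_diff_left sum_subtractf scaleR_sum_right)
    then show "(\<Sum>j<J. ys s j) = x" using cJ feas by simp
    have "(\<Sum>j<J. F j (ys s j)) = (\<Sum>j<J. (1 - s * c j) * F j (xs j))"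
    proof (rule sum.cong)
      fix j assume "j \<in> {..<J}"
      then show "F j (ys s j) = (1 - s * c j) * F j (xs j)"
        using hom[of j] hs feas unfolding homogeneous1_on_def ys_def by auto
    qed simp
    also have "\<dots> = (\<Sum>j<J. F j (xs j)) - s * D"
      by (simp add: D_def left_diff_distrib sum_subtractf sum_distrib_left mult.assoc)
    finally show "(\<Sum>j<J. F j (ys s j)) = (\<Sum>j<J. F j (xs j)) - s * D" .
  qed
  have ne: "c ` {..<J} \<noteq> {}" using pos SJ by auto
  obtain jM where jM: "jM < J" "c jM = Max (c ` {..<J})"
    using Max_in[OF _ ne] by auto
  have jMmax: "\<forall>j<J. c j \<le> c jM" using jM(2) by simp
  obtain jm where jm: "jm < J" "c jm = Min (c ` {..<J})"
    using Min_in[OF _ ne] by auto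
  have jmmin: "\<forall>j<J. c jm \<le> c j" using jm(2) by simp
  have cM: "c jM > 0" using pos jMmax SJ by force
  have cm: "c jm < 0" using neg jmmin SJ by force
  have h1: "\<forall>j<J. 0 \<le> 1 - (1 / c jM) * c j"
  proof (intro allI impI)
    fix j assume "j < J"
    then have "c j \<le> c jM" using jMmax by simp
    then show "0 \<le> 1 - (1 / c jM) * c j" using cM by (simp add: field_simps)
  qed
  have h2: "\<forall>j<J. 0 \<le> 1 - (1 / c jm) * c j"
  proof (intro allI impI)
    fix j assume "j < J"
    then have "c jm \<le> c j" using jmmin by simp
    then show "0 \<le> 1 - (1 / c jm) * c j" using cm by (simp add: field_simps)
  qed
  note k1 = key[OF h1] and k2 = key[OF h2]
  have "(\<Sum>j<J. F j (ys (1 / c jM) j)) \<le> (\<Sum>j<J. F j (xs j))"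
    using spec[OF max, of "ys (1 / c jM)"] k1 by blast
  then have "(1 / c jM) * D \<ge> 0" using k1 by linarith
  then have D1: "D \<ge> 0" using cM by (simp add: zero_le_divide_iff)
  have "(\<Sum>j<J. F j (ys (1 / c jm) j)) \<le> (\<Sum>j<J. F j (xs j))"
    using spec[OF max, of "ys (1 / c jm)"] k2 by blast
  then have "(1 / c jm) * D \<ge> 0" using k2 by linarith
  then have D2: "D \<le> 0" using cm by (simp add: zero_le_divide_iff)
  have D0: "D = 0" using D1 D2 by simp
  define xs' where "xs' = ys (1 / c jM)"
  have sub: "{j. j < J \<and> xs' j \<noteq> 0} \<subseteq> S - {jM}"
  proof
    fix j assume "j \<in> {j. j < J \<and> xs' j \<noteq> 0}"
    then have j: "j < J" "xs' j \<noteq> 0" by simp_all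
    have "xs j \<noteq> 0"
    proof
      assume "xs j = 0"
      then have "xs' j = 0" by (simp add: xs'_def ys_def)
      then show False using j(2) by simp
    qed
    moreover have "j \<noteq> jM"
    proof
      assume "j = jM"
      then have "xs' j = 0" using cM by (simp add: xs'_def ys_def)
      then show False using j(2) by simp
    qed
    ultimately show "j \<in> S - {jM}" using j(1) by (simp add: S_def)
  qed
  have jMS: "jM \<in> S"
  proof (rule ccontr)
    assume "jM \<notin> S"
    then have "c jM = 0" using c0 by simp
    then show False using cM by simp
  qed
  have "card {j. j < J \<and> xs' j \<noteq> 0} < card S"
  proof -
    have "card {j. j < J \<and> xs' j \<noteq> 0} \<le> card (S - {jM})"
      using sub fS by (intro card_mono) simp_all
    also have "\<dots> < card S" by (rule card_Diff1_less[OF fS jMS])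
    finally show ?thesis .
  qed
  then have cardlt: "card {j. j < J \<and> xs' j \<noteq> 0} < card {j. j < J \<and> xs j \<noteq> 0}"
    by (simp add: S_def)
  have f1: "\<forall>j<J. xs' j \<in> nonneg_orthant" and f2: "(\<Sum>j<J. xs' j) = x"
    and f3: "(\<Sum>j<J. F j (xs' j)) = (\<Sum>j<J. F j (xs j))"
    using k1 D0 unfolding xs'_def by simp_all
  have f4: "\<forall>ys :: nat \<Rightarrow> real ^ 'n. (\<forall>j<J. ys j \<in> nonneg_orthant) \<and> (\<Sum>j<J. ys j) = x
              \<longrightarrow> (\<Sum>j<J. F j (ys j)) \<le> (\<Sum>j<J. F j (xs' j))"
    using max unfolding f3 .
  show ?thesis
    apply (rule exI[of _ xs'])
    using f1 f2 f4 cardlt by blast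
qed


theorem proposition2:
  fixes J :: nat and F :: "nat \<Rightarrow> real ^ 'n \<Rightarrow> real" and x :: "real ^ 'n"
  assumes "J \<ge> 1"
    and "\<And>j. j < J \<Longrightarrow> \<forall>y\<in>nonneg_orthant. F j y \<ge> 0"
    and "\<And>j. j < J \<Longrightarrow> usc_on nonneg_orthant (F j)"
    and "\<And>j. j < J \<Longrightarrow> concave_on nonneg_orthant (F j)"
    and "\<And>j. j < J \<Longrightarrow> homogeneous1_on nonneg_orthant (F j)"
    and "x \<in> nonneg_orthant"
  shows "\<exists>xs :: nat \<Rightarrow> real ^ 'n.
           (\<forall>j<J. xs j \<in> nonneg_orthant) \<and> (\<Sum>j<J. xs j) = x \<and>
           (\<forall>ys :: nat \<Rightarrow> real ^ 'n. (\<forall>j<J. ys j \<in> nonneg_orthant) \<and> (\<Sum>j<J. ys j) = x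
              \<longrightarrow> (\<Sum>j<J. F j (ys j)) \<le> (\<Sum>j<J. F j (xs j))) \<and>
           card {j. j < J \<and> xs j \<noteq> 0} \<le> CARD('n)"
proof -
  define P where "P = (\<lambda>xs :: nat \<Rightarrow> real ^ 'n.
           (\<forall>j<J. xs j \<in> nonneg_orthant) \<and> (\<Sum>j<J. xs j) = x \<and>
           (\<forall>ys :: nat \<Rightarrow> real ^ 'n. (\<forall>j<J. ys j \<in> nonneg_orthant) \<and> (\<Sum>j<J. ys j) = x
              \<longrightarrow> (\<Sum>j<J. F j (ys j)) \<le> (\<Sum>j<J. F j (xs j))))"
  define sz where "sz = (\<lambda>xs :: nat \<Rightarrow> real ^ 'n. card {j. j < J \<and> xs j \<noteq> 0})"
  have red: "\<exists>xs'. P xs' \<and> sz xs' < sz xs" if "P xs" "sz xs > CARD('n)" for xs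
  proof -
    have "\<exists>xs' :: nat \<Rightarrow> real ^ 'n.
           (\<forall>j<J. xs' j \<in> nonneg_orthant) \<and> (\<Sum>j<J. xs' j) = x \<and>
           (\<forall>ys :: nat \<Rightarrow> real ^ 'n. (\<forall>j<J. ys j \<in> nonneg_orthant) \<and> (\<Sum>j<J. ys j) = x
              \<longrightarrow> (\<Sum>j<J. F j (ys j)) \<le> (\<Sum>j<J. F j (xs' j))) \<and>
           card {j. j < J \<and> xs' j \<noteq> 0} < card {j. j < J \<and> xs j \<noteq> 0}"
      using that unfolding P_def sz_def
      by (intro reduce[where F=F]) (simp_all add: assms(5))
    then show ?thesis unfolding P_def sz_def by blast
  qed
  have gen: "\<forall>xs. P xs \<and> sz xs = m \<longrightarrow> (\<exists>xs'. P xs' \<and> sz xs' \<le> CARD('n))" for m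
  proof (induction m rule: less_induct)
    case (less m)
    show ?case
    proof (intro allI impI)
      fix xs assume xs: "P xs \<and> sz xs = m"
      show "\<exists>xs'. P xs' \<and> sz xs' \<le> CARD('n)"
      proof (cases "sz xs \<le> CARD('n)")
        case True then show ?thesis using xs by blast
      next
        case False
        then obtain xs' where "P xs'" "sz xs' < sz xs" using red xs by force
        then show ?thesis using less xs by blast
      qed
    qed
  qed
  have "\<exists>xs. P xs"
    unfolding P_def by (rule exists_max[OF assms(1) assms(3) assms(6)])
  then obtain xs where "P xs" by blast
  then have "\<exists>xs'. P xs' \<and> sz xs' \<le> CARD('n)" using gen by blast
  then show ?thesis unfolding P_def sz_def by blast
qed

end
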